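(* Consider a single advertising slot sold by the following hybrid auction. Each advertiser $j$ submits a bid pair $(m_j, c_j)$ with $m_j, c_j \ge 0$ (a per-impression bid and a per-click bid). The auctioneer has, for each advertiser $j$, a value $q_j > 0$ (the auctioneer index) that does not depend on any bids. The effective bid of advertiser $j$ is $R_j = \max(m_j, c_j q_j)$. The advertiser $j^*$ with the highest effective bid wins the slot; let $R_{-j^*}$ denote the highest effective bid among the other advertisers. If $m_{j^*} > c_{j^*} q_{j^*}$, the winner pays $R_{-j^*}$ per impression; otherwise the winner pays $R_{-j^*}/q_{j^*}$ per click. Let advertiser $j$ have true value $v_j > 0$ per click, and let $\mathcal{P}_j$ be advertiser $j$'s belief (prior distribution) about its click-through probability, with mean $p_j = \mathbb{E}[\mathcal{P}_j] > 0$. Suppose advertiser $j$ is myopic and risk-neutral, i.e. it maximizes its expected profit in the current step, where if it wins it receives expected value $p_j v_j$ and pays either the per-impression price or $p_j$ times the per-click price. Then, regardless of the value of $q_j$, bidding $(v_j p_j, v_j)$ is a strongly dominant strategy for advertiser $j$: for every $q_j>0$ and every value of the highest competing effective bid, it yields expected profit at least as large as any other bid pair, and for every other bid pair $(m_j,c_j)$ there exist values of $q_j$ and of the highest competing effective bid for which $(m_j,c_j)$ yields strictly smaller expected profit than $(v_j p_j, v_j)$.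
   Context: Single-slot auction; all notation is defined in the claim. Expected profit of a losing advertiser is $0$. *)

theory Defs
  imports Main "HOL.Real"
begin

definition eff_bid :: "real \<Rightarrow> real \<Rightarrow> real \<Rightarrow> real" where
  "eff_bid q m c = max m (c * q)"

text \<open>Expected (myopic, risk-neutral) profit of advertiser j with value v per click
  and mean click-through belief p, bidding (m, c), given auctioneer index q and
  highest competing effective bid r.  The advertiser wins iff its effective bid
  strictly exceeds r (ties are lost; losing gives profit 0).\<close>
definition exp_profit ::
  "real \<Rightarrow> real \<Rightarrow> real \<Rightarrow> real \<Rightarrow> real \<Rightarrow> real \<Rightarrow> real" where
  "exp_profit v p q r m c =
     (if eff_bid q m c > r then
        (if m > c * q then p * v - r else p * v - p * (r / q))
      else 0)"

end

theory Submission
  imports Defs Complex_Main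
begin

lemma part1:
  fixes v p q r m c :: real
  assumes "v > 0" "p > 0" "q > 0" "r \<ge> 0" "m \<ge> 0" "c \<ge> 0"
  shows "exp_profit v p q r m c \<le> exp_profit v p q r (v * p) v"
proof (cases "q \<ge> p")
  case True
  have h1: "p * (r / q) \<le> r" using True assms
    by (simp add: mult_le_cancel_right1 divide_le_eq mult.commute mult_right_mono)
  have h2: "r < v * q \<Longrightarrow> 0 \<le> p * v - p * (r / q)"
    using assms by (simp add: divide_le_eq mult.commute right_diff_distrib[symmetric])
  have h3: "v * p \<le> v * q" using True assms by simp
  have h4: "r \<ge> v*q \<Longrightarrow> p * v - p * (r / q) \<le> 0"
    using assms by (simp add: le_divide_eq mult.commute right_diff_distrib[symmetric])
  show ?thesis unfolding exp_profit_def eff_bid_def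
    using h1 h2 h3 h4 by (auto simp: max_def split: if_splits)
next
  case False
  have h1: "p * (r / q) \<ge> r" using False assms
    by (simp add: le_divide_eq mult.commute mult_right_mono)
  have h3: "v * p > v * q" using False assms by simp
  show ?thesis unfolding exp_profit_def eff_bid_def
    using h1 h3 assms by (auto simp: max_def mult.commute split: if_splits)
qed


lemma part2:
  fixes v p m c :: real
  assumes "v > 0" "p > 0" "m \<ge> 0" "c \<ge> 0" "(m, c) \<noteq> (v * p, v)"
  shows "\<exists>q r. q > 0 \<and> r \<ge> 0 \<and> exp_profit v p q r m c < exp_profit v p q r (v * p) v"
proof -
  consider "c < v" | "c > v" | "c = v" "m < v * p" | "c = v" "m > v * p"
    using assms by fastforce
  then show ?thesis
  proof cases
    case 1
    define q where "q = max p ((m + 1) / (v - c))"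
    have qp: "q \<ge> p" and q0: "q > 0" unfolding q_def using assms by auto
    have "(m+1)/(v-c) \<le> q" unfolding q_def by simp
    hence "m + 1 \<le> q * (v - c)" using 1 by (simp add: divide_le_eq)
    hence E: "m + 1 + c*q \<le> v*q" by (simp add: algebra_simps)
    have C: "c*q \<ge> 0" using assms q0 by simp
    have A: "m < v*q" using E C by linarith
    have B: "c*q < v*q" using E assms by linarith
    define r where "r = (max m (c*q) + v*q) / 2"
    have M: "max m (c*q) < v*q" using A B by simp
    have r1: "max m (c*q) < r" unfolding r_def using M by simp
    have r2: "r < v*q" unfolding r_def using M by (simp add: mult.commute)
    have r0: "r \<ge> 0" using r1 assms by auto
    have "v * p \<le> v * q" using qp assms by simp
    moreover have "r / q < v" using r2 q0 by (simp add: divide_less_eq mult.commute)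
    hence "p * (r / q) < p * v" using assms(2) by (rule mult_strict_left_mono)
    hence "0 < p * v - p * (r / q)" by linarith
    ultimately have "exp_profit v p q r m c < exp_profit v p q r (v * p) v"
      unfolding exp_profit_def eff_bid_def using r1 r2 by (auto simp: max_def)
    thus ?thesis using q0 r0 by blast
  next
    case 2
    define q where "q = p"
    define r where "r = (v*q + c*q)/2"
    have q0: "q > 0" using assms q_def by simp
    have M: "v*q < c*q" using 2 q0 by simp
    have r1: "v*q < r" unfolding r_def using M by (simp add: mult.commute)
    have r2: "r < c*q" unfolding r_def using M by simp
    have r0: "r \<ge> 0" using r1 assms q0 by (smt (verit) mult_pos_pos)
    have "v < r / q" using r1 q0 by (simp add: less_divide_eq mult.commute)
    hence "p * v < p * (r / q)" using assms(2) by (rule mult_strict_left_mono)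
    hence n1: "p * v - p * (r / q) < 0" by linarith
    have n2: "p * v - r < 0" using r1 q_def by (simp add: mult.commute)
    have "exp_profit v p q r m c < exp_profit v p q r (v * p) v"
      unfolding exp_profit_def eff_bid_def using r1 r2 n1 n2 q_def
      by (auto simp: max_def mult.commute)
    thus ?thesis using q0 r0 by blast
  next
    case 3
    define q where "q = p/2"
    have q0: "q > 0" using assms q_def by simp
    have vq: "v*q < v*p" using assms q_def by simp
    define r where "r = (max m (v*q) + v*p)/2"
    have M: "max m (v*q) < v*p" using 3 vq by simp
    have r1: "max m (v*q) < r" unfolding r_def using M by simp
    have r2: "r < v*p" unfolding r_def using M by (simp add: mult.commute)
    have r0: "r \<ge> 0" using r1 assms by auto
    have "exp_profit v p q r m c < exp_profit v p q r (v * p) v"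
      unfolding exp_profit_def eff_bid_def using r1 r2 vq 3 by (auto simp: max_def mult.commute)
    thus ?thesis using q0 r0 by blast
  next
    case 4
    define q where "q = p/2"
    have q0: "q > 0" using assms q_def by simp
    have vq: "v*q < v*p" using assms q_def by simp
    define r where "r = (m + v*p)/2"
    have r1: "v*p < r" unfolding r_def using 4 by (simp add: mult.commute)
    have r2: "r < m" unfolding r_def using 4 by simp
    have r0: "r \<ge> 0" using r1 assms by (smt (verit) mult_pos_pos)
    have "exp_profit v p q r m c < exp_profit v p q r (v * p) v"
      unfolding exp_profit_def eff_bid_def using r1 r2 vq 4 by (auto simp: max_def mult.commute)
    thus ?thesis using q0 r0 by blast
  qed
qed

theorem theorem1:
  fixes v p :: real
  assumes "v > 0" and "p > 0"
  shows "(\<forall>q r m c. q > 0 \<longrightarrow> r \<ge> 0 \<longrightarrow> m \<ge> 0 \<longrightarrow> c \<ge> 0 \<longrightarrow>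
            exp_profit v p q r m c \<le> exp_profit v p q r (v * p) v)
       \<and> (\<forall>m c. m \<ge> 0 \<longrightarrow> c \<ge> 0 \<longrightarrow> (m, c) \<noteq> (v * p, v) \<longrightarrow>
            (\<exists>q r. q > 0 \<and> r \<ge> 0 \<and>
               exp_profit v p q r m c < exp_profit v p q r (v * p) v))"
  using part1[OF assms] part2[OF assms] by blast

end
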